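(* No deterministic mechanism that is truthful without money and with verification for CAs with known $2$-minded bidders has approximation ratio strictly less than $2$. This holds even restricted to instances with $n=2$ bidders and $m=2$ goods (and no computational restriction on the mechanism).
   Context: Combinatorial auction with a set $\mathsf U$ of $m$ goods (single copy each) and $n$ bidders; bidder $i$ has a public collection $\mathcal S_i$ of $k$ nonempty subsets of $\mathsf U$ (known bidders; here $k=2$) and a private valuation $v_i:\mathcal S_i\to\mathbb R_{\ge0}$, extended by $v_i(T)=\max\{v_i(S'):S'\in\mathcal S_i,S'\subseteq T\}$ ($0$ if none). A declaration is any valuation $b_i:\mathcal S_i\to\mathbb R_{\ge0}$. A mechanism maps declarations to pairwise disjoint sets with $A_i(\mathbf b)\in\mathcal S_i\cup\{\emptyset\}$. Verification: bidder $i$ with true valuation $v_i$ facing $\mathbf b_{-i}$ may declare $b_i$ only if $b_i(A_i(b_i,\mathbf b_{-i}))\le v_i(A_i(b_i,\mathbf b_{-i}))$. Truthful without money and with verification: for all $i$, $\mathbf b_{-i}$, true $v_i$ and permitted $b_i$, $v_i(A_i(v_i,\mathbf b_{-i}))\ge v_i(A_i(b_i,\mathbf b_{-i}))$. Approximation ratio $\alpha$: on every truthful input, $\sum_i v_i(A_i)\ge\mathrm{OPT}/\alpha$, where $\mathrm{OPT}$ is the maximum welfare of a feasible allocation. *)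

theory Defs
  imports Complex_Main
begin

text \<open>S i is the public collection of bidder i; declarations / valuations are
  functions on sets, required to be nonnegative on S i and zero elsewhere
  (they are only meaningful on S i).\<close>

definition valid_collections :: "'g set \<Rightarrow> nat \<Rightarrow> nat \<Rightarrow> (nat \<Rightarrow> 'g set set) \<Rightarrow> bool" where
  "valid_collections U n k S \<longleftrightarrow>
     (\<forall>i<n. S i \<subseteq> {T. T \<noteq> {} \<and> T \<subseteq> U} \<and> card (S i) = k)"

definition valid_decl :: "'g set set \<Rightarrow> ('g set \<Rightarrow> real) \<Rightarrow> bool" where
  "valid_decl C b \<longleftrightarrow> (\<forall>T\<in>C. b T \<ge> 0) \<and> (\<forall>T. T \<notin> C \<longrightarrow> b T = 0)"

definition valid_profile :: "nat \<Rightarrow> (nat \<Rightarrow> 'g set set) \<Rightarrow> (nat \<Rightarrow> 'g set \<Rightarrow> real) \<Rightarrow> bool" where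
  "valid_profile n S b \<longleftrightarrow> (\<forall>i<n. valid_decl (S i) (b i))"

definition ext_val :: "'g set set \<Rightarrow> ('g set \<Rightarrow> real) \<Rightarrow> 'g set \<Rightarrow> real" where
  "ext_val C v T = (if \<exists>S'\<in>C. S' \<subseteq> T then Max (v ` {S'\<in>C. S' \<subseteq> T}) else 0)"

definition feasible_alloc :: "nat \<Rightarrow> (nat \<Rightarrow> 'g set set) \<Rightarrow> (nat \<Rightarrow> 'g set) \<Rightarrow> bool" where
  "feasible_alloc n S X \<longleftrightarrow>
     (\<forall>i<n. X i \<in> S i \<union> {{}}) \<and> (\<forall>i<n. \<forall>j<n. i \<noteq> j \<longrightarrow> X i \<inter> X j = {})"

definition welfare :: "nat \<Rightarrow> (nat \<Rightarrow> 'g set set) \<Rightarrow> (nat \<Rightarrow> 'g set \<Rightarrow> real) \<Rightarrow> (nat \<Rightarrow> 'g set) \<Rightarrow> real" where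
  "welfare n S v X = (\<Sum>i<n. ext_val (S i) (v i) (X i))"

definition OPT :: "nat \<Rightarrow> (nat \<Rightarrow> 'g set set) \<Rightarrow> (nat \<Rightarrow> 'g set \<Rightarrow> real) \<Rightarrow> real" where
  "OPT n S v = Max {welfare n S v X | X. feasible_alloc n S X}"

type_synonym 'g mechanism = "(nat \<Rightarrow> 'g set set) \<Rightarrow> (nat \<Rightarrow> 'g set \<Rightarrow> real) \<Rightarrow> nat \<Rightarrow> 'g set"

definition is_mechanism :: "'g set \<Rightarrow> nat \<Rightarrow> nat \<Rightarrow> 'g mechanism \<Rightarrow> bool" where
  "is_mechanism U n k M \<longleftrightarrow>
     (\<forall>S b. valid_collections U n k S \<longrightarrow> valid_profile n S b \<longrightarrow> feasible_alloc n S (M S b))"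

definition truthful_verif :: "'g set \<Rightarrow> nat \<Rightarrow> nat \<Rightarrow> 'g mechanism \<Rightarrow> bool" where
  "truthful_verif U n k M \<longleftrightarrow>
     (\<forall>S b i vi bi. valid_collections U n k S \<longrightarrow> valid_profile n S b \<longrightarrow> i < n \<longrightarrow>
        valid_decl (S i) vi \<longrightarrow> valid_decl (S i) bi \<longrightarrow>
        ext_val (S i) bi (M S (b(i := bi)) i) \<le> ext_val (S i) vi (M S (b(i := bi)) i) \<longrightarrow>
        ext_val (S i) vi (M S (b(i := vi)) i) \<ge> ext_val (S i) vi (M S (b(i := bi)) i))"

definition approx_ratio :: "'g set \<Rightarrow> nat \<Rightarrow> nat \<Rightarrow> 'g mechanism \<Rightarrow> real \<Rightarrow> bool" where
  "approx_ratio U n k M \<alpha> \<longleftrightarrow> \<alpha> > 0 \<and>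
     (\<forall>S v. valid_collections U n k S \<longrightarrow> valid_profile n S v \<longrightarrow>
        welfare n S v (M S v) \<ge> OPT n S v / \<alpha>)"

end

theory Submission
  imports Defs
begin

lemma welfare2: "welfare 2 S v X = ext_val (S 0) (v 0) (X 0) + ext_val (S 1) (v 1) (X 1)"
  by (simp add: welfare_def numeral_2_eq_2)

lemma opt_ge:
  assumes fin: "finite (S 0)" "finite (S 1)" and feas: "feasible_alloc 2 S X"
  shows "welfare 2 S v X \<le> OPT 2 S v"
proof -
  let ?F = "{welfare 2 S v X | X. feasible_alloc 2 S X}"
  have "?F \<subseteq> (\<lambda>(A,B). ext_val (S 0) (v 0) A + ext_val (S 1) (v 1) B) ` ((S 0 \<union> {{}}) \<times> (S 1 \<union> {{}}))"
  proof
    fix w assume "w \<in> ?F"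
    then obtain Y where w: "w = welfare 2 S v Y" and fy: "feasible_alloc 2 S Y" by blast
    have y01: "Y 0 \<in> S 0 \<union> {{}}" "Y 1 \<in> S 1 \<union> {{}}" using fy unfolding feasible_alloc_def by auto
    show "w \<in> (\<lambda>(A,B). ext_val (S 0) (v 0) A + ext_val (S 1) (v 1) B) ` ((S 0 \<union> {{}}) \<times> (S 1 \<union> {{}}))"
    proof (rule image_eqI[where x="(Y 0, Y 1)"])
      show "w = (\<lambda>(A,B). ext_val (S 0) (v 0) A + ext_val (S 1) (v 1) B) (Y 0, Y 1)"
        using w welfare2[of S v Y] by simp
    qed (use y01 in auto)
  qed
  moreover have "finite ((\<lambda>(A,B). ext_val (S 0) (v 0) A + ext_val (S 1) (v 1) B) ` ((S 0 \<union> {{}}) \<times> (S 1 \<union> {{}})))"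
    using fin by auto
  ultimately have "finite ?F" by (rule finite_subset)
  moreover have "welfare 2 S v X \<in> ?F" using feas by blast
  ultimately show ?thesis unfolding OPT_def by (rule Max_ge)
qed

definition fv :: "'g \<Rightarrow> 'g \<Rightarrow> real \<Rightarrow> real \<Rightarrow> 'g set \<Rightarrow> real" where
  "fv a b x y = (\<lambda>T. if T = {a} then x else if T = {b} then y else 0)"

lemma ev:
  assumes "a \<noteq> b"
  shows "ext_val {{a},{b}} (fv a b x y) {a} = x"
    "ext_val {{a},{b}} (fv a b x y) {b} = y"
    "ext_val {{a},{b}} (fv a b x y) {} = 0"
proof -
  have "{S'\<in>{{a},{b}}. S' \<subseteq> {a}} = {{a}}" using assms by auto
  then show "ext_val {{a},{b}} (fv a b x y) {a} = x" unfolding ext_val_def fv_def by auto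
  have "{S'\<in>{{a},{b}}. S' \<subseteq> {b}} = {{b}}" using assms by auto
  then show "ext_val {{a},{b}} (fv a b x y) {b} = y" using assms unfolding ext_val_def fv_def by auto
  show "ext_val {{a},{b}} (fv a b x y) {} = 0" unfolding ext_val_def by auto
qed

lemma vd: "a \<noteq> b \<Longrightarrow> x \<ge> 0 \<Longrightarrow> y \<ge> 0 \<Longrightarrow> valid_decl {{a},{b}} (fv a b x y)"
  unfolding valid_decl_def fv_def by auto

theorem theorem11:
  fixes U :: "'g set" and M :: "'g mechanism" and \<alpha> :: real
  assumes "finite U" and "card U = 2"
    and "is_mechanism U 2 2 M"
    and "truthful_verif U 2 2 M"
    and "\<alpha> < 2"
  shows "\<not> approx_ratio U 2 2 M \<alpha>"
proof
  assume ar: "approx_ratio U 2 2 M \<alpha>"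
  then have apos: "\<alpha> > 0" unfolding approx_ratio_def by auto
  obtain a b where ab: "a \<noteq> b" "U = {a,b}" using assms(2) card_2_iff by metis
  define S :: "nat \<Rightarrow> 'g set set" where "S = (\<lambda>i. {{a},{b}})"
  have vc: "valid_collections U 2 2 S" unfolding valid_collections_def S_def using ab by auto
  define x where "x = \<alpha> / 2"
  have x0: "x \<ge> 0" "x < 1" using apos assms(5) unfolding x_def by auto
  define P0 where "P0 = (\<lambda>i::nat. fv a b 0 1)"
  have vp: "valid_profile 2 S (P0(i := fv a b x 1))" for i
    unfolding valid_profile_def S_def P0_def using vd[OF ab(1)] x0 by auto
  have vp0: "valid_profile 2 S P0"
    unfolding valid_profile_def S_def P0_def using vd[OF ab(1)] by auto
  have fin: "finite (S 0)" "finite (S 1)" unfolding S_def by auto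
  have feas: "feasible_alloc 2 S (M S p)" if "valid_profile 2 S p" for p
    using assms(3) vc that unfolding is_mechanism_def by blast
  have dom: "M S p i \<in> {{a},{b},{}}" if "valid_profile 2 S p" "i < 2" for p i
    using feas[OF that(1)] that(2) unfolding feasible_alloc_def S_def by auto
  have disj: "M S p 0 \<inter> M S p 1 = {}" if "valid_profile 2 S p" for p
    using feas[OF that(1)] unfolding feasible_alloc_def by auto
  have apx: "welfare 2 S p (M S p) \<ge> OPT 2 S p / \<alpha>" if "valid_profile 2 S p" for p
    using ar vc that unfolding approx_ratio_def by blast
  have tv: "ext_val (S i) vi (M S (P0(i := vi)) i) \<ge> ext_val (S i) vi (M S (P0(i := bi)) i)"
    if "i < 2" "valid_decl (S i) vi" "valid_decl (S i) bi"
       "ext_val (S i) bi (M S (P0(i := bi)) i) \<le> ext_val (S i) vi (M S (P0(i := bi)) i)" for i vi bi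
    using assms(4) vc vp0 that unfolding truthful_verif_def by blast
  have "1 \<le> OPT 2 S P0"
  proof -
    have "feasible_alloc 2 S (\<lambda>i. if i = 0 then {b} else {})"
      unfolding feasible_alloc_def S_def by auto
    from opt_ge[OF fin this, of P0] show ?thesis
      by (simp add: welfare2 S_def P0_def ev[OF ab(1)])
  qed
  then have "welfare 2 S P0 (M S P0) > 0" using apx[OF vp0] apos
    by (smt (verit, ccfv_SIG) divide_pos_pos)
  then have "M S P0 0 = {b} \<or> M S P0 1 = {b}"
    using dom[OF vp0, of 0] dom[OF vp0, of 1]
    by (auto simp: welfare2 S_def P0_def ev[OF ab(1)])
  then show False
  proof
    assume h: "M S P0 0 = {b}"
    let ?P = "P0(0 := fv a b x 1)"
    have "x + 1 \<le> OPT 2 S ?P"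
    proof -
      have "feasible_alloc 2 S (\<lambda>i. if i = 0 then {a} else if i = 1 then {b} else {})"
        unfolding feasible_alloc_def S_def using ab(1) by auto
      from opt_ge[OF fin this, of ?P] show ?thesis
        by (simp add: welfare2 S_def P0_def ev[OF ab(1)])
    qed
    then have "welfare 2 S ?P (M S ?P) > 1" using apx[OF vp] apos assms(5)
      by (smt (verit) le_divide_eq_1_pos divide_strict_right_mono x_def field_sum_of_halves)
    then have "M S ?P 0 = {a}"
      using dom[OF vp, of 0 0] dom[OF vp, of 1 0] disj[OF vp, of 0] x0 ab(1)
      by (auto simp: welfare2 S_def P0_def ev[OF ab(1)])
    moreover have "P0(0 := fv a b 0 1) = P0" unfolding P0_def by auto
    ultimately show False
      using tv[of 0 "fv a b x 1" "fv a b 0 1"] h vd[OF ab(1)] x0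
      by (simp add: S_def ev[OF ab(1)])
  next
    assume h: "M S P0 1 = {b}"
    let ?P = "P0(1 := fv a b x 1)"
    have "x + 1 \<le> OPT 2 S ?P"
    proof -
      have "feasible_alloc 2 S (\<lambda>i. if i = 0 then {b} else if i = 1 then {a} else {})"
        unfolding feasible_alloc_def S_def using ab(1) by auto
      from opt_ge[OF fin this, of ?P] show ?thesis
        by (simp add: welfare2 S_def P0_def ev[OF ab(1)])
    qed
    then have "welfare 2 S ?P (M S ?P) > 1" using apx[OF vp] apos assms(5)
      by (smt (verit) le_divide_eq_1_pos divide_strict_right_mono x_def field_sum_of_halves)
    then have "M S ?P 1 = {a}"
      using dom[OF vp, of 0 1] dom[OF vp, of 1 1] disj[OF vp, of 1] x0 ab(1)
      by (auto simp: welfare2 S_def P0_def ev[OF ab(1)])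
    moreover have "P0(1 := fv a b 0 1) = P0" unfolding P0_def by auto
    ultimately show False
      using tv[of 1 "fv a b x 1" "fv a b 0 1"] h vd[OF ab(1)] x0
      by (simp add: S_def ev[OF ab(1)])
  qed
qed

end
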